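(* Let $n,k$ be integers with $1 \leq k \leq n$, let $q$ be a prime power with $q > \binom{n-1}{k-1}$, and let $\mathbf{M}=(m_{i,j})$ be a $k \times n$ binary matrix in which every row has Hamming weight $n-k+1$. Then $\mathbf{M}$ is the support matrix of a generator matrix of some $[n,k]_q$ MDS code if and only if $f(\mathbf{V}_{\mathbf{M}}) \not\equiv 0$ (as a polynomial over $\mathbb{F}_q$).
   Context: For $\mathbf{G}=(g_{i,j}) \in \mathbb{F}_q^{k\times n}$, the support matrix of $\mathbf{G}$ is the $k\times n$ binary matrix with $(i,j)$ entry $0$ if $g_{i,j}=0$ and $1$ if $g_{i,j}\neq 0$. For a $k\times n$ binary matrix $\mathbf{M}=(m_{i,j})$, $\mathbf{V}_{\mathbf{M}}=(v_{i,j})$ is the matrix with $v_{i,j}=0$ if $m_{i,j}=0$ and $v_{i,j}=\xi_{i,j}$ if $m_{i,j}=1$, where the $\xi_{i,j}$ are distinct indeterminates. For any $k\times n$ matrix $\mathbf{N}$, $f(\mathbf{N})=\prod_{\mathbf{P}}\det(\mathbf{P})$, the product over all $\binom{n}{k}$ square submatrices $\mathbf{P}$ of order $k$ of $\mathbf{N}$ (obtained by choosing $k$ of the $n$ columns). An $[n,k]_q$ MDS code is a linear code of length $n$ and dimension $k$ over $\mathbb{F}_q$ with minimum distance $n-k+1$. *)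

theory Defs
  imports "Jordan_Normal_Form.Determinant" "Jordan_Normal_Form.DL_Submatrix" "HOL-Library.Poly_Mapping"
begin

text \<open>Multivariate polynomials over 'a in indeterminates indexed by pairs (i,j).\<close>
type_synonym 'a mpoly = "((nat \<times> nat) \<Rightarrow>\<^sub>0 nat) \<Rightarrow>\<^sub>0 'a"

definition Var :: "nat \<times> nat \<Rightarrow> 'a::comm_ring_1 mpoly" where
  "Var ij = Poly_Mapping.single (Poly_Mapping.single ij 1) 1"

definition support_mat :: "'a::zero mat \<Rightarrow> nat mat" where
  "support_mat G = mat (dim_row G) (dim_col G) (\<lambda>ij. if G $$ ij = 0 then 0 else 1)"

definition V_mat :: "nat mat \<Rightarrow> 'a::comm_ring_1 mpoly mat" where
  "V_mat M = mat (dim_row M) (dim_col M) (\<lambda>ij. if M $$ ij = 0 then 0 else Var ij)"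

definition f_prod :: "'a::comm_ring_1 mat \<Rightarrow> 'a" where
  "f_prod N = (\<Prod>S\<in>{S. S \<subseteq> {..<dim_col N} \<and> card S = dim_row N}. det (submatrix N UNIV S))"

definition code_of :: "'a::field mat \<Rightarrow> 'a vec set" where
  "code_of G = {transpose_mat G *\<^sub>v x | x. x \<in> carrier_vec (dim_row G)}"

definition hamming_wt :: "'a::zero vec \<Rightarrow> nat" where
  "hamming_wt c = card {j. j < dim_vec c \<and> c $ j \<noteq> 0}"

definition min_dist :: "nat \<Rightarrow> 'a::zero vec set \<Rightarrow> nat" where
  "min_dist n C = Min (hamming_wt ` (C - {0\<^sub>v n}))"

text \<open>G is a generator matrix of an [n,k] MDS code: G is k x n, its rows are linearly
  independent (so the code has dimension k), and the minimum distance is n-k+1.\<close>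
definition mds_generator :: "nat \<Rightarrow> nat \<Rightarrow> 'a::field mat \<Rightarrow> bool" where
  "mds_generator n k G \<longleftrightarrow> G \<in> carrier_mat k n
     \<and> inj_on (\<lambda>x. transpose_mat G *\<^sub>v x) (carrier_vec k)
     \<and> min_dist n (code_of G) = n - k + 1"

end

theory Submission
  imports Defs
begin


definition mono_ev :: "('v \<Rightarrow> 'a::comm_ring_1) \<Rightarrow> ('v \<Rightarrow>\<^sub>0 nat) \<Rightarrow> 'a" where
  "mono_ev x m = (\<Prod>v\<in>Poly_Mapping.keys m. x v ^ Poly_Mapping.lookup m v)"

definition ev :: "('v \<Rightarrow> 'a::comm_ring_1) \<Rightarrow> (('v \<Rightarrow>\<^sub>0 nat) \<Rightarrow>\<^sub>0 'a) \<Rightarrow> 'a" where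
  "ev x p = (\<Sum>m\<in>Poly_Mapping.keys p. Poly_Mapping.lookup p m * mono_ev x m)"

lemma mono_ev_superset:
  assumes "finite A" "Poly_Mapping.keys m \<subseteq> A"
  shows "mono_ev x m = (\<Prod>v\<in>A. x v ^ Poly_Mapping.lookup m v)"
  unfolding mono_ev_def
  by (rule prod.mono_neutral_left[OF assms(1,2)]) (auto simp: in_keys_iff)

lemma mono_ev_add: "mono_ev x (a + b) = mono_ev x a * mono_ev x b"
proof -
  let ?A = "Poly_Mapping.keys a \<union> Poly_Mapping.keys b"
  have f: "finite ?A" by simp
  have "mono_ev x (a + b) = (\<Prod>v\<in>?A. x v ^ Poly_Mapping.lookup (a+b) v)"
    by (rule mono_ev_superset[OF f]) (use keys_add[of a b] in auto)
  also have "\<dots> = (\<Prod>v\<in>?A. x v ^ Poly_Mapping.lookup a v) * (\<Prod>v\<in>?A. x v ^ Poly_Mapping.lookup b v)"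
    by (simp add: lookup_add power_add prod.distrib)
  also have "\<dots> = mono_ev x a * mono_ev x b"
    by (simp add: mono_ev_superset[OF f])
  finally show ?thesis .
qed

lemma mono_ev_zero[simp]: "mono_ev x 0 = 1"
  by (simp add: mono_ev_def)

lemma ev_superset:
  assumes "finite A" "Poly_Mapping.keys p \<subseteq> A"
  shows "ev x p = (\<Sum>m\<in>A. Poly_Mapping.lookup p m * mono_ev x m)"
  unfolding ev_def
  by (rule sum.mono_neutral_left[OF assms(1,2)]) (auto simp: in_keys_iff)

lemma ev_add: "ev x (p + q) = ev x p + ev x q"
proof -
  let ?A = "Poly_Mapping.keys p \<union> Poly_Mapping.keys q"
  have f: "finite ?A" by simp
  have "ev x (p + q) = (\<Sum>m\<in>?A. Poly_Mapping.lookup (p+q) m * mono_ev x m)"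
    by (rule ev_superset[OF f]) (use keys_add[of p q] in auto)
  also have "\<dots> = (\<Sum>m\<in>?A. Poly_Mapping.lookup p m * mono_ev x m) + (\<Sum>m\<in>?A. Poly_Mapping.lookup q m * mono_ev x m)"
    by (simp add: lookup_add distrib_right sum.distrib)
  also have "\<dots> = ev x p + ev x q"
    by (simp add: ev_superset[OF f])
  finally show ?thesis .
qed

lemma ev_zero[simp]: "ev x 0 = 0"
  by (simp add: ev_def)

lemma ev_single: "ev x (Poly_Mapping.single m c) = c * mono_ev x m"
  by (simp add: ev_def)

lemma update_as_add:
  assumes "a \<notin> Poly_Mapping.keys f"
  shows "Poly_Mapping.update a b f = f + Poly_Mapping.single a b"
  using assms
  by (intro poly_mapping_eqI) (auto simp: lookup_update lookup_add lookup_single in_keys_iff when_def)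

lemma ev_mult_single: "ev x (Poly_Mapping.single m c * q) = c * mono_ev x m * ev x q"
proof (induction q rule: update_induct)
  case const
  then show ?case by simp
next
  case (update f a b)
  have "Poly_Mapping.single m c * Poly_Mapping.update a b f
        = Poly_Mapping.single m c * f + Poly_Mapping.single (m + a) (c * b)"
    by (simp add: update_as_add[OF update(1)] distrib_left mult_single)
  then have "ev x (Poly_Mapping.single m c * Poly_Mapping.update a b f)
     = c * mono_ev x m * ev x f + c * b * mono_ev x (m + a)"
    by (simp add: ev_add ev_single update(3))
  also have "\<dots> = c * mono_ev x m * ev x (Poly_Mapping.update a b f)"
    by (simp add: update_as_add[OF update(1)] ev_add ev_single mono_ev_add algebra_simps)
  finally show ?case .
qed

lemma ev_mult: "ev x (p * q) = ev x p * ev x q"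
proof (induction p rule: update_induct)
  case const
  then show ?case by simp
next
  case (update f a b)
  have "Poly_Mapping.update a b f * q = f * q + Poly_Mapping.single a b * q"
    by (simp add: update_as_add[OF update(1)] distrib_right)
  then have "ev x (Poly_Mapping.update a b f * q) = ev x f * ev x q + b * mono_ev x a * ev x q"
    by (simp add: ev_add ev_mult_single update(3))
  also have "\<dots> = ev x (Poly_Mapping.update a b f) * ev x q"
    by (simp add: update_as_add[OF update(1)] ev_add ev_single algebra_simps)
  finally show ?case .
qed

lemma ev_one: "ev x 1 = 1"
  by (metis ev_single mono_ev_zero mult_1 single_one)

interpretation ev_hom: comm_ring_hom "ev x"
  by unfold_locales (simp_all add: ev_add ev_mult ev_one)

lemma ev_Var: "ev x (Var ij) = x ij"
  by (simp add: Var_def ev_single mono_ev_def)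




definition Sk :: "nat \<Rightarrow> nat \<Rightarrow> nat set set" where
  "Sk n k = {S. S \<subseteq> {..<n} \<and> card S = k}"

lemma finite_Sk: "finite (Sk n k)"
  unfolding Sk_def by (rule finite_subset[of _ "Pow {..<n}"]) auto

lemma Sk_finite_mem: "S \<in> Sk n k \<Longrightarrow> finite S"
  unfolding Sk_def by (auto intro: finite_subset[OF _ finite_lessThan])

lemma pick_lt_in: "S \<in> Sk n k \<Longrightarrow> l < k \<Longrightarrow> pick S l \<in> S"
  unfolding Sk_def by (auto intro: pick_in_set_le)

lemma pick_lt_n: "S \<in> Sk n k \<Longrightarrow> l < k \<Longrightarrow> pick S l < n"
  using pick_lt_in unfolding Sk_def by blast

lemma pick_inj: "S \<in> Sk n k \<Longrightarrow> l1 < k \<Longrightarrow> l2 < k \<Longrightarrow> pick S l1 = pick S l2 \<Longrightarrow> l1 = l2"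
proof -
  assume a: "S \<in> Sk n k" "l1 < k" "l2 < k" "pick S l1 = pick S l2"
  have c: "card S = k" using a(1) unfolding Sk_def by simp
  have 1: "card {x\<in>S. x < pick S l1} = l1" by (rule card_pick_le) (use a c in simp)
  have 2: "card {x\<in>S. x < pick S l2} = l2" by (rule card_pick_le) (use a c in simp)
  show "l1 = l2" using 1 2 a(4) by metis
qed

lemma pick_surj: assumes "S \<in> Sk n k" "j \<in> S" shows "\<exists>l<k. pick S l = j"
proof -
  have fin: "finite S" using Sk_finite_mem[OF assms(1)] .
  have "{a\<in>S. a < j} \<subset> S" using assms(2) by auto
  then have "card {a\<in>S. a < j} < card S" using fin by (simp add: psubset_card_mono)
  then show ?thesis using assms pick_card_in_set[OF assms(2)] unfolding Sk_def by auto
qed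

lemma sub_eq:
  assumes "A \<in> carrier_mat k n" "S \<in> Sk n k"
  shows "submatrix A UNIV S = mat k k (\<lambda>(i,l). A $$ (i, pick S l))"
proof -
  have r: "{i. i < dim_row A \<and> i \<in> UNIV} = {..<k}" using assms(1) by auto
  have c: "{j. j < dim_col A \<and> j \<in> S} = S" using assms unfolding Sk_def by auto
  have ck: "card S = k" using assms(2) unfolding Sk_def by auto
  show ?thesis unfolding submatrix_def r c ck by (simp add: pick_UNIV)
qed

lemma finite_carrier_vec': "finite (carrier_vec n :: 'a::finite vec set)"
proof -
  have "carrier_vec n \<subseteq> vec_of_list ` {xs :: 'a list. set xs \<subseteq> UNIV \<and> length xs = n}"
  proof
    fix v :: "'a vec" assume v: "v \<in> carrier_vec n"
    have "length (list_of_vec v) = n" using v by simp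
    moreover have "v = vec_of_list (list_of_vec v)" by (simp only: vec_list)
    ultimately show "v \<in> vec_of_list ` {xs. set xs \<subseteq> UNIV \<and> length xs = n}"
      by blast
  qed
  moreover have "finite {xs :: 'a list. set xs \<subseteq> UNIV \<and> length xs = n}"
    by (rule finite_lists_length_eq) (rule finite_UNIV)
  ultimately show ?thesis by (meson finite_imageI finite_subset)
qed

lemma tv_index:
  assumes "G \<in> carrier_mat k n" "z \<in> carrier_vec k" "j < n"
  shows "(transpose_mat G *\<^sub>v z) $ j = (\<Sum>i<k. G $$ (i,j) * z $ i)"
proof -
  have "(transpose_mat G *\<^sub>v z) $ j = col G j \<bullet> z" using assms by simp
  also have "\<dots> = (\<Sum>i\<in>{0..<k}. col G j $ i * z $ i)"
    unfolding scalar_prod_def using assms(2) by simp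
  also have "\<dots> = (\<Sum>i<k. G $$ (i,j) * z $ i)"
    unfolding atLeast0LessThan by (rule sum.cong) (use assms in auto)
  finally show ?thesis .
qed

lemma tv_sub:
  assumes "G \<in> carrier_mat k n" "z \<in> carrier_vec k" "S \<in> Sk n k" "l < k"
  shows "(transpose_mat (submatrix G UNIV S) *\<^sub>v z) $ l = (transpose_mat G *\<^sub>v z) $ (pick S l)"
proof -
  have "(transpose_mat (submatrix G UNIV S) *\<^sub>v z) $ l = (\<Sum>i<k. submatrix G UNIV S $$ (i,l) * z $ i)"
    by (rule tv_index[of _ k k]) (simp_all add: sub_eq[OF assms(1,3)] assms(2,4))
  also have "\<dots> = (\<Sum>i<k. G $$ (i, pick S l) * z $ i)"
    using sub_eq[OF assms(1,3)] assms(4) by simp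
  also have "\<dots> = (transpose_mat G *\<^sub>v z) $ (pick S l)"
    by (rule tv_index[of G k n, symmetric]) (use assms pick_lt_n in auto)
  finally show ?thesis .
qed

lemma minor_kernel:
  fixes G :: "'a::field mat"
  assumes G: "G \<in> carrier_mat k n" and z: "z \<in> carrier_vec k" and S: "S \<in> Sk n k"
    and d: "det (submatrix G UNIV S) \<noteq> 0"
    and van: "\<forall>j\<in>S. (transpose_mat G *\<^sub>v z) $ j = 0"
  shows "z = 0\<^sub>v k"
proof (rule ccontr)
  assume nz: "z \<noteq> 0\<^sub>v k"
  have Gc: "submatrix G UNIV S \<in> carrier_mat k k" using sub_eq[OF G S] by simp
  have Tc: "transpose_mat (submatrix G UNIV S) \<in> carrier_mat k k" using Gc by simp
  have "transpose_mat (submatrix G UNIV S) *\<^sub>v z = 0\<^sub>v k"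
  proof (rule eq_vecI)
    fix l assume "l < dim_vec (0\<^sub>v k :: 'a vec)"
    then have l: "l < k" by simp
    show "(transpose_mat (submatrix G UNIV S) *\<^sub>v z) $ l = 0\<^sub>v k $ l"
      using tv_sub[OF G z S l] van pick_lt_in[OF S l] l by simp
  qed (use Tc in simp)
  then have "det (transpose_mat (submatrix G UNIV S)) = 0"
    using det_0_iff_vec_prod_zero_field[OF Tc] z nz by blast
  then show False using d det_transpose[OF Gc] by simp
qed

lemma wt_le:
  assumes "Z \<subseteq> {..<n}" "\<forall>j\<in>Z. c $ j = 0" "dim_vec c = n"
  shows "hamming_wt c \<le> n - card Z"
proof -
  have "{j. j < dim_vec c \<and> c $ j \<noteq> 0} \<subseteq> {..<n} - Z" using assms by auto
  then have "hamming_wt c \<le> card ({..<n} - Z)" unfolding hamming_wt_def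
    by (intro card_mono) auto
  also have "\<dots> = n - card Z" using assms(1) finite_subset[OF assms(1)] by (simp add: card_Diff_subset)
  finally show ?thesis .
qed

lemma wt_small_zeros:
  assumes "hamming_wt c \<le> n - k" "dim_vec c = n" "k \<le> n"
  shows "\<exists>S\<in>Sk n k. \<forall>j\<in>S. c $ j = 0"
proof -
  let ?N = "{j. j < n \<and> c $ j \<noteq> 0}"
  let ?Z = "{..<n} - ?N"
  have "card ?Z = n - card ?N" by (simp add: card_Diff_subset subset_eq)
  moreover have "card ?N \<le> n - k" using assms unfolding hamming_wt_def by simp
  ultimately have "k \<le> card ?Z" using assms(3) by linarith
  then obtain S where "S \<subseteq> ?Z" "card S = k" by (meson obtain_subset_with_card_n)
  then show ?thesis unfolding Sk_def by (intro bexI[of _ S]) auto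
qed




lemma tv_zero:
  assumes "G \<in> carrier_mat k n"
  shows "transpose_mat G *\<^sub>v 0\<^sub>v k = 0\<^sub>v n"
proof (rule eq_vecI)
  fix j assume "j < dim_vec (0\<^sub>v n :: 'a vec)"
  then have j: "j < n" by simp
  show "(transpose_mat G *\<^sub>v 0\<^sub>v k) $ j = 0\<^sub>v n $ j"
    using tv_index[OF assms zero_carrier_vec j] j by simp
qed (use assms in simp)

lemma code_finite:
  fixes G :: "'a::{field,finite} mat"
  shows "finite (code_of G)"
proof -
  have "code_of G = (\<lambda>x. transpose_mat G *\<^sub>v x) ` carrier_vec (dim_row G)"
    unfolding code_of_def by auto
  then show ?thesis using finite_imageI[OF finite_carrier_vec'] by metis
qed

lemma mds_imp_minors:
  fixes G :: "'a::{field,finite} mat"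
  assumes mds: "mds_generator n k G" and S: "S \<in> Sk n k"
  shows "det (submatrix G UNIV S) \<noteq> 0"
proof
  assume d0: "det (submatrix G UNIV S) = 0"
  have G: "G \<in> carrier_mat k n" and inj: "inj_on (\<lambda>x. transpose_mat G *\<^sub>v x) (carrier_vec k)"
    and md: "min_dist n (code_of G) = n - k + 1"
    using mds unfolding mds_generator_def by auto
  have Gc: "submatrix G UNIV S \<in> carrier_mat k k" using sub_eq[OF G S] by simp
  have Tc: "transpose_mat (submatrix G UNIV S) \<in> carrier_mat k k" using Gc by simp
  have "det (transpose_mat (submatrix G UNIV S)) = 0" using d0 det_transpose[OF Gc] by simp
  then obtain z where z: "z \<in> carrier_vec k" "z \<noteq> 0\<^sub>v k"
     and zk: "transpose_mat (submatrix G UNIV S) *\<^sub>v z = 0\<^sub>v k"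
    using det_0_iff_vec_prod_zero_field[OF Tc] by blast
  define c where "c = transpose_mat G *\<^sub>v z"
  have cdim: "dim_vec c = n" using G unfolding c_def by simp
  have cnz: "c \<noteq> 0\<^sub>v n"
  proof
    assume "c = 0\<^sub>v n"
    then have "transpose_mat G *\<^sub>v z = transpose_mat G *\<^sub>v 0\<^sub>v k"
      using tv_zero[OF G] unfolding c_def by simp
    then have "z = 0\<^sub>v k" using inj z(1) zero_carrier_vec unfolding inj_on_def by blast
    then show False using z(2) by simp
  qed
  have cin: "c \<in> code_of G" unfolding c_def code_of_def using G z(1) by auto
  have van: "\<forall>j\<in>S. c $ j = 0"
  proof
    fix j assume "j \<in> S"
    then obtain l where l: "l < k" "pick S l = j" using pick_surj[OF S] by blast
    have "c $ j = (transpose_mat (submatrix G UNIV S) *\<^sub>v z) $ l"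
      using tv_sub[OF G z(1) S l(1)] l(2) unfolding c_def by simp
    then show "c $ j = 0" using zk l(1) by simp
  qed
  have Ssub: "S \<subseteq> {..<n}" "card S = k" using S unfolding Sk_def by auto
  have wt: "hamming_wt c \<le> n - k" using wt_le[OF Ssub(1) van cdim] Ssub(2) by simp
  have fin: "finite (hamming_wt ` (code_of G - {0\<^sub>v n}))" using code_finite[of G] by simp
  have "min_dist n (code_of G) \<le> hamming_wt c"
    unfolding min_dist_def by (rule Min_le[OF fin]) (use cin cnz in auto)
  then show False using md wt by simp
qed

lemma minors_imp_mds:
  fixes G :: "'a::{field,finite} mat"
  assumes G: "G \<in> carrier_mat k n" and k1: "1 \<le> k" and kn: "k \<le> n"
   and minors: "\<forall>S\<in>Sk n k. det (submatrix G UNIV S) \<noteq> 0"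
   and row0: "card {j. j < n \<and> G $$ (0,j) \<noteq> 0} = n - k + 1"
  shows "mds_generator n k G"
proof -
  have S0: "{..<k} \<in> Sk n k" unfolding Sk_def using kn by auto
  have key: "z = 0\<^sub>v k" if z: "z \<in> carrier_vec k" and wt: "hamming_wt (transpose_mat G *\<^sub>v z) \<le> n - k" for z
  proof -
    have "dim_vec (transpose_mat G *\<^sub>v z) = n" using G by simp
    then obtain S where S: "S \<in> Sk n k" and van: "\<forall>j\<in>S. (transpose_mat G *\<^sub>v z) $ j = 0"
      using wt_small_zeros[OF wt _ kn] by blast
    show ?thesis by (rule minor_kernel[OF G z S]) (use minors S van in auto)
  qed
  have inj: "inj_on (\<lambda>x. transpose_mat G *\<^sub>v x) (carrier_vec k)"
  proof (rule inj_onI)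
    fix x y :: "'a vec" assume x: "x \<in> carrier_vec k" and y: "y \<in> carrier_vec k"
      and eq: "transpose_mat G *\<^sub>v x = transpose_mat G *\<^sub>v y"
    have xy: "x - y \<in> carrier_vec k" using x y by simp
    have "transpose_mat G *\<^sub>v (x - y) = transpose_mat G *\<^sub>v x - transpose_mat G *\<^sub>v y"
      by (rule mult_minus_distrib_mat_vec[of _ n k]) (use G x y in auto)
    also have "\<dots> = 0\<^sub>v n" using eq G by (auto intro!: eq_vecI)
    finally have "hamming_wt (transpose_mat G *\<^sub>v (x - y)) = 0"
      unfolding hamming_wt_def by simp
    then have "x - y = 0\<^sub>v k" using key[OF xy] by simp
    show "x = y"
    proof (rule eq_vecI)
      fix i assume "i < dim_vec y"
      then show "x $ i = y $ i" using \<open>x - y = 0\<^sub>v k\<close> x y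
        by (metis carrier_vecD index_minus_vec(1) index_zero_vec(1) right_minus_eq)
    qed (use x y in simp)
  qed
  define z0 :: "'a vec" where "z0 = unit_vec k 0"
  have z0: "z0 \<in> carrier_vec k" unfolding z0_def by simp
  define c0 where "c0 = transpose_mat G *\<^sub>v z0"
  have c0idx: "c0 $ j = G $$ (0,j)" if j: "j < n" for j
  proof -
    have "c0 $ j = (\<Sum>i<k. G $$ (i,j) * z0 $ i)" unfolding c0_def by (rule tv_index[OF G z0 j])
    also have "\<dots> = (\<Sum>i<k. if i = 0 then G $$ (i,j) else 0)"
      by (rule sum.cong) (auto simp: z0_def)
    also have "\<dots> = G $$ (0,j)" using k1 by simp
    finally show ?thesis .
  qed
  have c0wt: "hamming_wt c0 = n - k + 1"
  proof -
    have "{j. j < dim_vec c0 \<and> c0 $ j \<noteq> 0} = {j. j < n \<and> G $$ (0,j) \<noteq> 0}"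
      using c0idx G unfolding c0_def by auto
    then show ?thesis unfolding hamming_wt_def using row0 by simp
  qed
  have c0nz: "c0 \<noteq> 0\<^sub>v n"
  proof
    assume "c0 = 0\<^sub>v n"
    then have "hamming_wt c0 = 0" unfolding hamming_wt_def by simp
    then show False using c0wt by simp
  qed
  have c0in: "c0 \<in> code_of G - {0\<^sub>v n}" using c0nz G z0 unfolding c0_def code_of_def by auto
  have lower: "n - k + 1 \<le> hamming_wt c" if c: "c \<in> code_of G - {0\<^sub>v n}" for c
  proof (rule ccontr)
    assume "\<not> n - k + 1 \<le> hamming_wt c"
    then have w: "hamming_wt c \<le> n - k" by simp
    from c obtain z where z: "z \<in> carrier_vec k" and cz: "c = transpose_mat G *\<^sub>v z"
      unfolding code_of_def using G by auto
    have "z = 0\<^sub>v k" using key[OF z] w cz by simp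
    then have "c = 0\<^sub>v n" using cz tv_zero[OF G] by simp
    then show False using c by simp
  qed
  have fin: "finite (hamming_wt ` (code_of G - {0\<^sub>v n}))" using code_finite[of G] by simp
  have "min_dist n (code_of G) = n - k + 1"
    unfolding min_dist_def
  proof (rule Min_eqI[OF fin])
    show "n - k + 1 \<in> hamming_wt ` (code_of G - {0\<^sub>v n})"
      using c0in c0wt by (metis image_eqI)
  qed (use lower in auto)
  then show ?thesis unfolding mds_generator_def using G inj by simp
qed




lemma det_leib:
  "det (mat k k (\<lambda>(i,l). a i l)) = (\<Sum>p\<in>{p. p permutes {0..<k}}. signof p * (\<Prod>i=0..<k. a i (p i)))"
proof -
  have "det (mat k k (\<lambda>(i,l). a i l)) = (\<Sum>p\<in>{p. p permutes {0..<k}}. signof p * (\<Prod>i=0..<k. mat k k (\<lambda>(i,l). a i l) $$ (i, p i)))"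
    by (rule det_def') simp
  also have "\<dots> = (\<Sum>p\<in>{p. p permutes {0..<k}}. signof p * (\<Prod>i=0..<k. a i (p i)))"
  proof (rule sum.cong[OF refl])
    fix p assume "p \<in> {p. p permutes {0..<k}}"
    then have p: "p permutes {0..<k}" by simp
    have "(\<Prod>i=0..<k. mat k k (\<lambda>(i,l). a i l) $$ (i, p i)) = (\<Prod>i=0..<k. a i (p i))"
    proof (rule prod.cong[OF refl])
      fix i assume i: "i \<in> {0..<k}"
      then have "p i \<in> {0..<k}" using permutes_in_image[OF p] by simp
      then show "mat k k (\<lambda>(i,l). a i l) $$ (i, p i) = a i (p i)" using i by simp
    qed
    then show "signof p * (\<Prod>i=0..<k. mat k k (\<lambda>(i,l). a i l) $$ (i, p i)) = signof p * (\<Prod>i=0..<k. a i (p i))"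
      by simp
  qed
  finally show ?thesis .
qed

lemma det_affine_row:
  fixes a b c :: "nat \<Rightarrow> nat \<Rightarrow> 'a::comm_ring_1"
  assumes i0: "i0 < k"
   and oth: "\<And>i l. i < k \<Longrightarrow> l < k \<Longrightarrow> i \<noteq> i0 \<Longrightarrow> b i l = a i l \<and> c i l = a i l"
   and row: "\<And>l. l < k \<Longrightarrow> a i0 l = t * b i0 l + (1 - t) * c i0 l"
  shows "det (mat k k (\<lambda>(i,l). a i l)) = t * det (mat k k (\<lambda>(i,l). b i l)) + (1 - t) * det (mat k k (\<lambda>(i,l). c i l))"
proof -
  have trm: "signof p * (\<Prod>i=0..<k. a i (p i)) = t * (signof p * (\<Prod>i=0..<k. b i (p i))) + (1 - t) * (signof p * (\<Prod>i=0..<k. c i (p i)))"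
    if p: "p permutes {0..<k}" for p
  proof -
    have i0k: "i0 \<in> {0..<k}" using i0 by simp
    have pi0: "p i0 < k" using permutes_in_image[OF p] i0k by simp
    have rest: "(\<Prod>i\<in>{0..<k}-{i0}. b i (p i)) = (\<Prod>i\<in>{0..<k}-{i0}. a i (p i))"
               "(\<Prod>i\<in>{0..<k}-{i0}. c i (p i)) = (\<Prod>i\<in>{0..<k}-{i0}. a i (p i))"
    proof -
      have "b i (p i) = a i (p i) \<and> c i (p i) = a i (p i)" if i: "i \<in> {0..<k}-{i0}" for i
      proof -
        have "p i \<in> {0..<k}" using permutes_in_image[OF p] i by simp
        then show ?thesis using oth i by simp
      qed
      then show "(\<Prod>i\<in>{0..<k}-{i0}. b i (p i)) = (\<Prod>i\<in>{0..<k}-{i0}. a i (p i))"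
                "(\<Prod>i\<in>{0..<k}-{i0}. c i (p i)) = (\<Prod>i\<in>{0..<k}-{i0}. a i (p i))"
        by (auto intro!: prod.cong)
    qed
    have fin: "finite {0..<k}" by simp
    show ?thesis
      unfolding prod.remove[OF fin i0k, of "\<lambda>i. a i (p i)"] prod.remove[OF fin i0k, of "\<lambda>i. b i (p i)"]
        prod.remove[OF fin i0k, of "\<lambda>i. c i (p i)"] rest row[OF pi0]
      by (simp add: algebra_simps)
  qed
  show ?thesis
    unfolding det_leib sum_distrib_left sum.distrib[symmetric]
    by (rule sum.cong[OF refl]) (use trm in auto)
qed

lemma det_zero_row:
  fixes a :: "nat \<Rightarrow> nat \<Rightarrow> 'a::comm_ring_1"
  assumes i0: "i0 < k" and z: "\<And>l. l < k \<Longrightarrow> a i0 l = 0"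
  shows "det (mat k k (\<lambda>(i,l). a i l)) = 0"
  unfolding det_leib
proof (rule sum.neutral, rule ballI)
  fix p assume "p \<in> {p. p permutes {0..<k}}"
  then have p: "p permutes {0..<k}" by simp
  have "p i0 < k" using permutes_in_image[OF p] i0 by simp
  then have "(\<Prod>i=0..<k. a i (p i)) = 0" using i0 z by (intro prod_zero bexI[of _ i0]) auto
  then show "signof p * (\<Prod>i=0..<k. a i (p i)) = 0" by simp
qed

definition ent :: "nat mat \<Rightarrow> (nat \<times> nat \<Rightarrow> 'a::field) \<Rightarrow> nat \<Rightarrow> nat \<Rightarrow> 'a" where
  "ent M y i j = (if M $$ (i,j) = 0 then 0 else y (i,j))"

definition DD :: "nat mat \<Rightarrow> nat \<Rightarrow> nat set \<Rightarrow> (nat \<times> nat \<Rightarrow> 'a::field) \<Rightarrow> 'a" where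
  "DD M k S y = det (mat k k (\<lambda>(i,l). ent M y i (pick S l)))"

lemma DD_cong:
  assumes "\<And>i l. i < k \<Longrightarrow> l < k \<Longrightarrow> M $$ (i, pick S l) \<noteq> 0 \<Longrightarrow> y (i, pick S l) = y' (i, pick S l)"
  shows "DD M k S y = DD M k S y'"
  unfolding DD_def
  by (rule arg_cong[of _ _ det], rule cong_mat) (use assms in \<open>auto simp: ent_def\<close>)

lemma DD_affine:
  fixes y :: "nat \<times> nat \<Rightarrow> 'a::field"
  assumes i0: "i0 < k"
  shows "DD M k S (y((i0,j0):=t)) = t * DD M k S (y((i0,j0):=1)) + (1 - t) * DD M k S (y((i0,j0):=0))"
  unfolding DD_def
proof (rule det_affine_row[OF i0])
  fix i l assume "i < k" "l < k" "i \<noteq> i0"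
  then show "ent M (y((i0, j0) := 1)) i (pick S l) = ent M (y((i0, j0) := t)) i (pick S l) \<and>
         ent M (y((i0, j0) := 0)) i (pick S l) = ent M (y((i0, j0) := t)) i (pick S l)"
    by (simp add: ent_def)
next
  fix l assume "l < k"
  show "ent M (y((i0, j0) := t)) i0 (pick S l) =
         t * ent M (y((i0, j0) := 1)) i0 (pick S l) + (1 - t) * ent M (y((i0, j0) := 0)) i0 (pick S l)"
    by (cases "pick S l = j0") (auto simp: ent_def algebra_simps)
qed

lemma DD_zero_row:
  fixes y :: "nat \<times> nat \<Rightarrow> 'a::field"
  assumes i0: "i0 < k" and z: "\<And>l. l < k \<Longrightarrow> pick S l \<noteq> j0 \<Longrightarrow> M $$ (i0, pick S l) = 0"
  shows "DD M k S (y((i0,j0):=0)) = 0"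
  unfolding DD_def
  by (rule det_zero_row[OF i0]) (use z in \<open>auto simp: ent_def\<close>)




lemma card_Sk_containing:
  assumes j0: "j0 < n" and k1: "1 \<le> k"
  shows "card {S\<in>Sk n k. j0 \<in> S} = (n - 1) choose (k - 1)"
proof -
  let ?A = "{S\<in>Sk n k. j0 \<in> S}"
  let ?B = "{T. T \<subseteq> {..<n} - {j0} \<and> card T = k - 1}"
  have "bij_betw (\<lambda>S. S - {j0}) ?A ?B"
  proof (rule bij_betw_byWitness[where f' = "insert j0"])
    show "\<forall>S\<in>?A. insert j0 (S - {j0}) = S" by auto
    show "\<forall>T\<in>?B. insert j0 T - {j0} = T" by auto
    show "(\<lambda>S. S - {j0}) ` ?A \<subseteq> ?B"
    proof
      fix T assume "T \<in> (\<lambda>S. S - {j0}) ` ?A"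
      then obtain S where S: "S \<in> Sk n k" "j0 \<in> S" and T: "T = S - {j0}" by auto
      have "finite S" using Sk_finite_mem[OF S(1)] .
      then have "card T = k - 1" using S T unfolding Sk_def by simp
      then show "T \<in> ?B" using S T unfolding Sk_def by auto
    qed
    show "insert j0 ` ?B \<subseteq> ?A"
    proof
      fix S assume "S \<in> insert j0 ` ?B"
      then obtain T where T: "T \<subseteq> {..<n} - {j0}" "card T = k - 1" and S: "S = insert j0 T" by auto
      have fT: "finite T" using T(1) by (rule finite_subset) simp
      have "j0 \<notin> T" using T(1) by auto
      then have "card S = k" using S T(2) fT k1 by simp
      then show "S \<in> ?A" using S T j0 unfolding Sk_def by auto
    qed
  qed
  then have "card ?A = card ?B" by (rule bij_betw_same_card)
  also have "\<dots> = card ({..<n} - {j0}) choose (k - 1)" by (rule n_subsets) simp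
  also have "card ({..<n} - {j0}) = n - 1" using j0 by simp
  finally show ?thesis .
qed


lemma main_ind:
  fixes M :: "nat mat"
  assumes k1: "1 \<le> k" and kn: "k \<le> n"
   and M01: "\<forall>i<k. \<forall>j<n. M $$ (i,j) \<in> {0,1}"
   and rw: "\<forall>i<k. card {j. j < n \<and> M $$ (i,j) = 1} = n - k + 1"
   and q: "card (UNIV :: 'a::{finite,field} set) > (n - 1) choose (k - 1)"
   and H0: "\<forall>S\<in>Sk n k. \<exists>y :: nat \<times> nat \<Rightarrow> 'a. DD M k S y \<noteq> 0"
   and fT: "finite T" and TP: "T \<subseteq> {(i,j). i<k \<and> j<n \<and> M $$ (i,j) \<noteq> 0}"
  shows "\<exists>c :: nat \<times> nat \<Rightarrow> 'a. (\<forall>v\<in>T. c v \<noteq> 0) \<and> (\<forall>S\<in>Sk n k. \<exists>y. (\<forall>v\<in>T. y v = c v) \<and> DD M k S y \<noteq> 0)"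
  using fT TP
proof (induction T rule: finite_induct)
  case empty
  then show ?case using H0 by auto
next
  case (insert v T)
  obtain i0 j0 where v: "v = (i0,j0)" by force
  have i0: "i0 < k" and j0: "j0 < n" and Mv: "M $$ (i0,j0) \<noteq> 0" using insert(4) v by auto
  from insert(3,4) obtain c :: "nat \<times> nat \<Rightarrow> 'a" where cnz: "\<forall>w\<in>T. c w \<noteq> 0"
    and cw: "\<forall>S\<in>Sk n k. \<exists>y. (\<forall>w\<in>T. y w = c w) \<and> DD M k S y \<noteq> 0" by auto
  define Bad where "Bad S = {a::'a. a \<noteq> 0 \<and> (\<forall>y. (\<forall>w\<in>T. y w = c w) \<longrightarrow> y v = a \<longrightarrow> DD M k S y = 0)}" for S
  have agree: "\<forall>w\<in>T. (y(v:=t)) w = c w" if "\<forall>w\<in>T. y w = c w" for y t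
    using that insert(2) by auto
  have badD: "DD M k S (y(v:=a)) = 0" if "a \<in> Bad S" "\<forall>w\<in>T. y w = c w" for a S y
    using that agree[OF that(2)] unfolding Bad_def by auto
  have aff: "DD M k S (y(v:=t)) = t * DD M k S (y(v:=1)) + (1 - t) * DD M k S (y(v:=0))" for S y t
    unfolding v by (rule DD_affine[OF i0])
  have yv: "y(v := y v) = y" for y :: "nat \<times> nat \<Rightarrow> 'a" by simp
  have b1: "Bad S = {}" if S: "S \<in> Sk n k" "j0 \<notin> S" for S
  proof -
    obtain y0 where y0: "\<forall>w\<in>T. y0 w = c w" "DD M k S y0 \<noteq> 0" using cw S by blast
    have eq: "DD M k S (y0(v:=a)) = DD M k S y0" for a
      by (rule DD_cong) (use pick_lt_in[OF S(1)] S(2) v in auto)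
    show ?thesis
    proof (rule ccontr)
      assume "Bad S \<noteq> {}"
      then obtain a where "a \<in> Bad S" by auto
      then show False using badD[OF _ y0(1)] eq y0(2) by metis
    qed
  qed
  have b3: "card (Bad S) \<le> 1" if S: "S \<in> Sk n k" for S
  proof -
    obtain y0 where y0: "\<forall>w\<in>T. y0 w = c w" "DD M k S y0 \<noteq> 0" using cw S by blast
    define g1 where "g1 = DD M k S (y0(v:=1))"
    define g0 where "g0 = DD M k S (y0(v:=0))"
    have g: "DD M k S (y0(v:=t)) = t * g1 + (1 - t) * g0" for t unfolding g1_def g0_def by (rule aff)
    have "a1 = a2" if a1: "a1 \<in> Bad S" and a2: "a2 \<in> Bad S" for a1 a2
    proof (rule ccontr)
      assume ne: "a1 \<noteq> a2"
      have e1: "a1 * g1 + (1 - a1) * g0 = 0" using badD[OF a1 y0(1)] g by simp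
      have e2: "a2 * g1 + (1 - a2) * g0 = 0" using badD[OF a2 y0(1)] g by simp
      have "(a1 - a2) * (g1 - g0) = (a1 * g1 + (1 - a1) * g0) - (a2 * g1 + (1 - a2) * g0)"
        by (simp add: algebra_simps)
      then have "(a1 - a2) * (g1 - g0) = 0" using e1 e2 by simp
      then have g10: "g1 = g0" using ne by simp
      then have "g0 = 0" using e1 by (simp add: algebra_simps)
      then have "DD M k S (y0(v:=y0 v)) = 0" using g[of "y0 v"] g10 by simp
      then show False using y0(2) by simp
    qed
    moreover have "finite (Bad S)" by simp
    ultimately show ?thesis using card_le_Suc0_iff_eq by (metis One_nat_def)
  qed
  define Z where "Z = {j. j < n \<and> M $$ (i0,j) = 0}"
  define W where "W = {j. j < n \<and> M $$ (i0,j) = 1}"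
  have ZW: "Z = {..<n} - W" unfolding Z_def W_def using M01 i0 by auto
  have cW: "card W = n - k + 1" using rw i0 unfolding W_def by simp
  have cZ: "card Z = k - 1" unfolding ZW using cW kn k1
    by (subst card_Diff_subset) (auto simp: W_def)
  define S0 where "S0 = insert j0 Z"
  have j0Z: "j0 \<notin> Z" using Mv unfolding Z_def by simp
  have fZ: "finite Z" unfolding Z_def by simp
  have S0: "S0 \<in> Sk n k" unfolding Sk_def S0_def using cZ j0Z fZ k1 j0 by (auto simp: Z_def)
  have b2: "Bad S0 = {}"
  proof (rule ccontr)
    assume "Bad S0 \<noteq> {}"
    then obtain a where a: "a \<in> Bad S0" by auto
    obtain y0 where y0: "\<forall>w\<in>T. y0 w = c w" "DD M k S0 y0 \<noteq> 0" using cw S0 by blast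
    define g1 where "g1 = DD M k S0 (y0(v:=1))"
    have g0: "DD M k S0 (y0(v:=0)) = 0" unfolding v
    proof (rule DD_zero_row[OF i0])
      fix l assume l: "l < k" "pick S0 l \<noteq> j0"
      have "pick S0 l \<in> S0" by (rule pick_lt_in[OF S0 l(1)])
      then show "M $$ (i0, pick S0 l) = 0" using l(2) unfolding S0_def Z_def by auto
    qed
    have g: "DD M k S0 (y0(v:=t)) = t * g1" for t using aff[of S0 y0 t] g0 unfolding g1_def by simp
    have anz: "a \<noteq> 0" using a unfolding Bad_def by simp
    have "a * g1 = 0" using badD[OF a y0(1)] g by simp
    then have "g1 = 0" using anz by simp
    then have "DD M k S0 (y0(v:=y0 v)) = 0" using g[of "y0 v"] by simp
    then show False using y0(2) by simp
  qed
  define I where "I = {S\<in>Sk n k. j0 \<in> S} - {S0}"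
  have finI: "finite I" unfolding I_def using finite_Sk[of n k] by simp
  have sub: "(\<Union>S\<in>Sk n k. Bad S) \<subseteq> (\<Union>S\<in>I. Bad S)"
  proof
    fix a assume "a \<in> (\<Union>S\<in>Sk n k. Bad S)"
    then obtain S where S: "S \<in> Sk n k" "a \<in> Bad S" by auto
    have "j0 \<in> S" using b1 S by blast
    moreover have "S \<noteq> S0" using b2 S by blast
    ultimately show "a \<in> (\<Union>S\<in>I. Bad S)" using S unfolding I_def by blast
  qed
  have cI: "card I = ((n - 1) choose (k - 1)) - 1"
  proof -
    have "S0 \<in> {S\<in>Sk n k. j0 \<in> S}" using S0 unfolding S0_def by simp
    then show ?thesis unfolding I_def
      using card_Sk_containing[OF j0 k1] finite_Sk[of n k] by (simp add: card_Diff_singleton)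
  qed
  have "card (\<Union>S\<in>I. Bad S) \<le> (\<Sum>S\<in>I. card (Bad S))" by (rule card_UN_le[OF finI])
  also have "\<dots> \<le> (\<Sum>S\<in>I. 1)" by (rule sum_mono) (use b3 I_def in auto)
  also have "\<dots> = ((n - 1) choose (k - 1)) - 1" using cI by simp
  finally have cU: "card (\<Union>S\<in>Sk n k. Bad S) \<le> ((n - 1) choose (k - 1)) - 1"
    using card_mono[OF _ sub] by (meson finite order_trans)
  have "k - 1 \<le> n - 1" using kn by simp
  then have Cpos: "(n - 1) choose (k - 1) \<ge> 1" using zero_less_binomial[of "k - 1" "n - 1"] by linarith
  have cNZ: "card (UNIV - {0::'a}) = card (UNIV :: 'a set) - 1" by (simp add: card_Diff_singleton)
  have "\<exists>a. a \<in> UNIV - {0::'a} \<and> a \<notin> (\<Union>S\<in>Sk n k. Bad S)"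
  proof (rule ccontr)
    assume "\<not> ?thesis"
    then have "UNIV - {0::'a} \<subseteq> (\<Union>S\<in>Sk n k. Bad S)" by auto
    then have "card (UNIV - {0::'a}) \<le> card (\<Union>S\<in>Sk n k. Bad S)" by (rule card_mono[rotated]) simp
    then show False using cU cNZ q Cpos by linarith
  qed
  then obtain a :: 'a where anz: "a \<noteq> 0" and anb: "\<forall>S\<in>Sk n k. a \<notin> Bad S" by auto
  define c' where "c' = c(v:=a)"
  have "\<forall>w\<in>insert v T. c' w \<noteq> 0" using cnz anz unfolding c'_def by auto
  moreover have "\<exists>y. (\<forall>w\<in>insert v T. y w = c' w) \<and> DD M k S y \<noteq> 0" if S: "S \<in> Sk n k" for S
  proof -
    have "a \<notin> Bad S" using anb S by auto
    then obtain y where y: "\<forall>w\<in>T. y w = c w" "y v = a" "DD M k S y \<noteq> 0"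
      using anz unfolding Bad_def by auto
    have "\<forall>w\<in>insert v T. y w = c' w" using y(1,2) insert(2) unfolding c'_def by auto
    then show ?thesis using y(3) by blast
  qed
  ultimately show ?case by blast
qed




lemma fprod_eq:
  assumes "N \<in> carrier_mat k n"
  shows "f_prod N = (\<Prod>S\<in>Sk n k. det (submatrix N UNIV S))"
  unfolding f_prod_def Sk_def using assms by simp

lemma V_index:
  assumes "M \<in> carrier_mat k n" "i < k" "j < n"
  shows "(V_mat M :: 'a::comm_ring_1 mpoly mat) $$ (i,j) = (if M $$ (i,j) = 0 then 0 else Var (i,j))"
  unfolding V_mat_def using assms by simp

lemma V_carrier: "M \<in> carrier_mat k n \<Longrightarrow> (V_mat M :: 'a::comm_ring_1 mpoly mat) \<in> carrier_mat k n"
  unfolding V_mat_def by simp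

lemma forward:
  fixes G :: "'a::{field,finite} mat"
  assumes mds: "mds_generator n k G" and sup: "support_mat G = M"
  shows "f_prod (V_mat M :: 'a mpoly mat) \<noteq> 0"
proof
  assume f0: "f_prod (V_mat M :: 'a mpoly mat) = 0"
  have G: "G \<in> carrier_mat k n" using mds unfolding mds_generator_def by simp
  have Mc: "M \<in> carrier_mat k n" using G sup unfolding support_mat_def by auto
  have Midx: "M $$ (i,j) = (if G $$ (i,j) = 0 then 0 else 1)" if "i < k" "j < n" for i j
    using sup[symmetric] G that unfolding support_mat_def by auto
  let ?V = "V_mat M :: 'a mpoly mat"
  define x where "x = (\<lambda>ij. G $$ ij)"
  have Vc: "?V \<in> carrier_mat k n" by (rule V_carrier[OF Mc])
  have sub: "map_mat (ev x) (submatrix ?V UNIV S) = submatrix G UNIV S" if S: "S \<in> Sk n k" for S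
  proof -
    have "map_mat (ev x) (submatrix ?V UNIV S) = map_mat (ev x) (mat k k (\<lambda>(i,l). ?V $$ (i, pick S l)))"
      using sub_eq[OF Vc S] by simp
    also have "\<dots> = mat k k (\<lambda>(i,l). G $$ (i, pick S l))"
    proof (rule eq_matI)
      fix i l assume il: "i < dim_row (mat k k (\<lambda>(i,l). G $$ (i, pick S l)))" "l < dim_col (mat k k (\<lambda>(i,l). G $$ (i, pick S l)))"
      then have i: "i < k" and l: "l < k" by auto
      have pn: "pick S l < n" using pick_lt_n[OF S l] .
      show "map_mat (ev x) (mat k k (\<lambda>(i,l). ?V $$ (i, pick S l))) $$ (i, l) = mat k k (\<lambda>(i,l). G $$ (i, pick S l)) $$ (i, l)"
        using i l pn V_index[OF Mc i pn, where 'a='a] Midx[OF i pn] by (cases "G $$ (i, pick S l) = 0") (simp_all add: ev_Var x_def)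
    qed auto
    also have "\<dots> = submatrix G UNIV S" using sub_eq[OF G S] by simp
    finally show ?thesis .
  qed
  have "ev x (f_prod ?V) = (\<Prod>S\<in>Sk n k. ev x (det (submatrix ?V UNIV S)))"
    unfolding fprod_eq[OF Vc] by (rule ev_hom.hom_prod)
  also have "\<dots> = (\<Prod>S\<in>Sk n k. det (submatrix G UNIV S))"
  proof (rule prod.cong[OF refl])
    fix S assume S: "S \<in> Sk n k"
    show "ev x (det (submatrix ?V UNIV S)) = det (submatrix G UNIV S)"
      using ev_hom.hom_det[of x "submatrix ?V UNIV S"] sub[OF S] by simp
  qed
  also have "\<dots> \<noteq> 0" using mds_imp_minors[OF mds] finite_Sk[of n k] by simp
  finally show False using f0 by simp
qed


lemma perm_mat_det:
  assumes p: "p permutes {0..<k}"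
  shows "det (mat k k (\<lambda>(i,l). if l = p i then 1 else 0 :: 'a::comm_ring_1)) = signof p"
proof -
  let ?f = "\<lambda>q. signof q * (\<Prod>i=0..<k. (if q i = p i then 1 else 0 :: 'a))"
  have fin: "finite {q. q permutes {0..<k}}" by (simp add: finite_permutations)
  have pin: "p \<in> {q. q permutes {0..<k}}" using p by simp
  have "det (mat k k (\<lambda>(i,l). if l = p i then 1 else 0 :: 'a)) = sum ?f {q. q permutes {0..<k}}"
    by (rule det_leib)
  also have "\<dots> = ?f p + sum ?f ({q. q permutes {0..<k}} - {p})"
    by (rule sum.remove[OF fin pin])
  also have "sum ?f ({q. q permutes {0..<k}} - {p}) = 0"
  proof (rule sum.neutral, rule ballI)
    fix q assume "q \<in> {q. q permutes {0..<k}} - {p}"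
    then have q: "q permutes {0..<k}" "q \<noteq> p" by auto
    have "\<exists>i<k. q i \<noteq> p i"
    proof (rule ccontr)
      assume "\<not> (\<exists>i<k. q i \<noteq> p i)"
      then have "\<forall>i. q i = p i"
        using permutes_not_in[OF q(1)] permutes_not_in[OF p] by (metis atLeastLessThan_iff zero_le not_le)
      then show False using q(2) by auto
    qed
    then obtain i where "i < k" "q i \<noteq> p i" by auto
    then have "(\<Prod>i=0..<k. (if q i = p i then 1 else 0 :: 'a)) = 0"
      by (intro prod_zero bexI[of _ i]) auto
    then show "?f q = 0" by simp
  qed
  finally show ?thesis by simp
qed

lemma signof_nz: "(signof p :: 'a::field) \<noteq> 0"
  by (simp add: sign_def)

lemma H0_from_f:
  fixes M :: "nat mat"
  assumes Mc: "M \<in> carrier_mat k n"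
    and f: "f_prod (V_mat M :: 'a::{field,finite} mpoly mat) \<noteq> 0"
    and S: "S \<in> Sk n k"
  shows "\<exists>y :: nat \<times> nat \<Rightarrow> 'a. DD M k S y \<noteq> 0"
proof -
  let ?V = "V_mat M :: 'a mpoly mat"
  have Vc: "?V \<in> carrier_mat k n" by (rule V_carrier[OF Mc])
  have "det (submatrix ?V UNIV S) \<noteq> 0"
  proof
    assume "det (submatrix ?V UNIV S) = 0"
    then have "f_prod ?V = 0" unfolding fprod_eq[OF Vc]
      by (intro prod_zero[OF finite_Sk] bexI[OF _ S])
    then show False using f by simp
  qed
  then have "det (mat k k (\<lambda>(i,l). ?V $$ (i, pick S l))) \<noteq> 0" using sub_eq[OF Vc S] by simp
  then have sne: "(\<Sum>p\<in>{p. p permutes {0..<k}}. signof p * (\<Prod>i=0..<k. ?V $$ (i, pick S (p i)))) \<noteq> 0"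
    unfolding det_leib by simp
  have "\<exists>p\<in>{p. p permutes {0..<k}}. signof p * (\<Prod>i=0..<k. ?V $$ (i, pick S (p i))) \<noteq> 0"
  proof (rule ccontr)
    assume "\<not> ?thesis"
    then have "\<forall>p\<in>{p. p permutes {0..<k}}. signof p * (\<Prod>i=0..<k. ?V $$ (i, pick S (p i))) = 0"
      by simp
    then have "(\<Sum>p\<in>{p. p permutes {0..<k}}. signof p * (\<Prod>i=0..<k. ?V $$ (i, pick S (p i)))) = 0"
      by (rule sum.neutral)
    then show False using sne by simp
  qed
  then obtain p where p: "p permutes {0..<k}"
    and pr: "signof p * (\<Prod>i=0..<k. ?V $$ (i, pick S (p i))) \<noteq> 0"
    by blast
  have pk: "p i < k" if "i < k" for i using permutes_in_image[OF p] that by simp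
  have Mnz: "M $$ (i, pick S (p i)) \<noteq> 0" if i: "i < k" for i
  proof
    assume M0: "M $$ (i, pick S (p i)) = 0"
    have "?V $$ (i, pick S (p i)) = 0"
      using V_index[OF Mc i pick_lt_n[OF S pk[OF i]], where 'a='a] M0 by simp
    then have "(\<Prod>i=0..<k. ?V $$ (i, pick S (p i))) = 0" using i by (intro prod_zero bexI[of _ i]) auto
    then show False using pr by simp
  qed
  define y where "y = (\<lambda>(i,j). if i < k \<and> j = pick S (p i) then 1 else 0 :: 'a)"
  have "DD M k S y = det (mat k k (\<lambda>(i,l). if l = p i then 1 else 0 :: 'a))"
    unfolding DD_def
  proof (rule arg_cong[of _ _ det], rule cong_mat)
    fix i l assume i: "i < k" and l: "l < k"
    show "(case (i, l) of (i, l) \<Rightarrow> ent M y i (pick S l)) = (case (i, l) of (i, l) \<Rightarrow> if l = p i then 1 else 0)"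
    proof (cases "l = p i")
      case True
      then show ?thesis using Mnz[OF i] i unfolding ent_def y_def by simp
    next
      case False
      then have "pick S l \<noteq> pick S (p i)" using pick_inj[OF S l pk[OF i]] by auto
      then show ?thesis using False i unfolding ent_def y_def by simp
    qed
  qed auto
  also have "\<dots> = signof p" by (rule perm_mat_det[OF p])
  finally show ?thesis using signof_nz by metis
qed

lemma backward:
  fixes M :: "nat mat"
  assumes k1: "1 \<le> k" and kn: "k \<le> n" and Mc: "M \<in> carrier_mat k n"
   and M01: "\<forall>i<k. \<forall>j<n. M $$ (i,j) \<in> {0,1}"
   and rw: "\<forall>i<k. card {j. j < n \<and> M $$ (i,j) = 1} = n - k + 1"
   and q: "card (UNIV :: 'a::{finite,field} set) > (n - 1) choose (k - 1)"
   and f: "f_prod (V_mat M :: 'a mpoly mat) \<noteq> 0"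
  shows "\<exists>G :: 'a mat. mds_generator n k G \<and> support_mat G = M"
proof -
  let ?P = "{(i,j). i<k \<and> j<n \<and> M $$ (i,j) \<noteq> 0}"
  have H0: "\<forall>S\<in>Sk n k. \<exists>y :: nat \<times> nat \<Rightarrow> 'a. DD M k S y \<noteq> 0"
    using H0_from_f[OF Mc f] by blast
  have finP: "finite ?P" by (rule finite_subset[of _ "{..<k} \<times> {..<n}"]) auto
  obtain c :: "nat \<times> nat \<Rightarrow> 'a" where cnz: "\<forall>v\<in>?P. c v \<noteq> 0"
    and cw: "\<forall>S\<in>Sk n k. \<exists>y. (\<forall>v\<in>?P. y v = c v) \<and> DD M k S y \<noteq> 0"
    using main_ind[OF k1 kn M01 rw q H0 finP subset_refl] by blast
  define G where "G = mat k n (\<lambda>(i,j). ent M c i j)"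
  have G: "G \<in> carrier_mat k n" unfolding G_def by simp
  have minors: "\<forall>S\<in>Sk n k. det (submatrix G UNIV S) \<noteq> 0"
  proof
    fix S assume S: "S \<in> Sk n k"
    obtain y where y: "\<forall>v\<in>?P. y v = c v" "DD M k S y \<noteq> 0" using cw S by blast
    have "DD M k S y = DD M k S c"
      by (rule DD_cong) (use y(1) pick_lt_n[OF S] in auto)
    also have "DD M k S c = det (submatrix G UNIV S)"
      unfolding sub_eq[OF G S] DD_def
      by (rule arg_cong[of _ _ det], rule cong_mat) (use pick_lt_n[OF S] in \<open>auto simp: G_def\<close>)
    finally show "det (submatrix G UNIV S) \<noteq> 0" using y(2) by simp
  qed
  have sup: "support_mat G = M"
  proof (rule eq_matI)
    fix i j assume "i < dim_row M" "j < dim_col M"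
    then have i: "i < k" and j: "j < n" using Mc by auto
    show "support_mat G $$ (i, j) = M $$ (i, j)"
    proof -
      have m: "M $$ (i,j) = 0 \<or> M $$ (i,j) = 1" using M01 i j by auto
      show ?thesis
        using i j m cnz unfolding support_mat_def G_def ent_def by auto
    qed
  qed (use Mc in \<open>auto simp: support_mat_def G_def\<close>)
  have row0: "card {j. j < n \<and> G $$ (0,j) \<noteq> 0} = n - k + 1"
  proof -
    have "{j. j < n \<and> G $$ (0,j) \<noteq> 0} = {j. j < n \<and> M $$ (0,j) = 1}"
    proof (rule Collect_cong)
      fix j
      show "(j < n \<and> G $$ (0,j) \<noteq> 0) = (j < n \<and> M $$ (0,j) = 1)"
      proof (cases "j < n")
        case True
        have m: "M $$ (0,j) = 0 \<or> M $$ (0,j) = 1" using M01 True k1 by auto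
        show ?thesis using True m cnz k1 unfolding G_def ent_def by auto
      qed simp
    qed
    then show ?thesis using rw k1 by simp
  qed
  have "mds_generator n k G" by (rule minors_imp_mds[OF G k1 kn minors row0])
  then show ?thesis using sup by blast
qed



theorem lemma1:
  fixes n k :: nat and M :: "nat mat"
  assumes "1 \<le> k" "k \<le> n"
    and "card (UNIV :: 'a::{finite,field} set) > (n - 1) choose (k - 1)"
    and "M \<in> carrier_mat k n"
    and "\<forall>i<k. \<forall>j<n. M $$ (i,j) \<in> {0,1}"
    and "\<forall>i<k. card {j. j < n \<and> M $$ (i,j) = 1} = n - k + 1"
  shows "(\<exists>G :: 'a mat. mds_generator n k G \<and> support_mat G = M)
         \<longleftrightarrow> f_prod (V_mat M :: 'a mpoly mat) \<noteq> 0"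
proof
  assume "\<exists>G :: 'a mat. mds_generator n k G \<and> support_mat G = M"
  then obtain G :: "'a mat" where "mds_generator n k G" "support_mat G = M" by blast
  then show "f_prod (V_mat M :: 'a mpoly mat) \<noteq> 0" by (rule forward)
next
  assume "f_prod (V_mat M :: 'a mpoly mat) \<noteq> 0"
  then show "\<exists>G :: 'a mat. mds_generator n k G \<and> support_mat G = M"
    using backward[OF assms(1,2,4,5,6,3)] by blast
qed

end
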